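(* $\mathcal{S}_P\subseteq\mathcal{S}_F\subseteq\mathcal{S}_C\subseteq\mathcal{D}^-$.
   Context: For a distribution function $G$, $G^{-1}(u)=\inf\{x\in\mathbb{R}:G(x)\ge u\}$ for $0<u<1$. For distribution functions $F,G$, write $F\le_{skew}G$ if the function $x\mapsto G^{-1}(F(x))$ is convex (on the set of $x$ with $0<F(x)<1$). For a distribution function $F$, $\mathcal{S}(F)=\{G: F\le_{skew}G\}$. Set $\mathcal{S}_P=\mathcal{S}(F_P)$ with $F_P(x)=1-1/x$, $x\ge1$ (Pareto(1)); $\mathcal{S}_F=\mathcal{S}(F_F)$ with $F_F(x)=e^{-1/x}$, $x>0$ (standard Fréchet); $\mathcal{S}_C=\mathcal{S}(F_C)$ with $F_C(x)=\frac1\pi\arctan(x)+\frac12$, $x\in\mathbb{R}$ (Cauchy). For real random variables, $X \le_{st} Y$ means $P(X\le t)\ge P(Y\le t)$ for all $t\in\mathbb{R}$. A distribution function $F_X$ belongs to $\mathcal{D}^-$ if for every $n\in\mathbb{N}$, all $\theta_1,\dots,\theta_n\ge 0$ with $\sum_{i=1}^n\theta_i=1$, and i.i.d. random variables $X_1,\dots,X_n$ with distribution $F_X$, we have $X_1\le_{st}\sum_{i=1}^n\theta_iX_i$. *)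

theory Defs
  imports "HOL-Probability.Probability"
begin

definition is_dist_fun :: "(real \<Rightarrow> real) \<Rightarrow> bool" where
  "is_dist_fun G \<longleftrightarrow> mono G \<and> (\<forall>x. continuous (at_right x) G)
     \<and> (G \<longlongrightarrow> 0) at_bot \<and> (G \<longlongrightarrow> 1) at_top"

definition quantile :: "(real \<Rightarrow> real) \<Rightarrow> real \<Rightarrow> real" where
  "quantile G u = Inf {x. G x \<ge> u}"

definition skew_le :: "(real \<Rightarrow> real) \<Rightarrow> (real \<Rightarrow> real) \<Rightarrow> bool" where
  "skew_le F G \<longleftrightarrow> convex_on {x. 0 < F x \<and> F x < 1} (\<lambda>x. quantile G (F x))"

definition skew_class :: "(real \<Rightarrow> real) \<Rightarrow> (real \<Rightarrow> real) set" where
  "skew_class F = {G. is_dist_fun G \<and> skew_le F G}"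

definition F_P :: "real \<Rightarrow> real" where
  "F_P x = (if x \<ge> 1 then 1 - 1 / x else 0)"

definition F_F :: "real \<Rightarrow> real" where
  "F_F x = (if x > 0 then exp (- 1 / x) else 0)"

definition F_C :: "real \<Rightarrow> real" where
  "F_C x = arctan x / pi + 1 / 2"

abbreviation "S_P \<equiv> skew_class F_P"
abbreviation "S_F \<equiv> skew_class F_F"
abbreviation "S_C \<equiv> skew_class F_C"

definition st_le :: "'a measure \<Rightarrow> ('a \<Rightarrow> real) \<Rightarrow> ('a \<Rightarrow> real) \<Rightarrow> bool" where
  "st_le M X Y \<longleftrightarrow> (\<forall>t. measure M {\<omega> \<in> space M. X \<omega> \<le> t} \<ge> measure M {\<omega> \<in> space M. Y \<omega> \<le> t})"

text \<open>Membership in D^-, with the underlying probability spaces ranging over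
  measures on the sample-space type 'a (the theorem quantifies over all types 'a).\<close>
definition Dminus :: "'a itself \<Rightarrow> (real \<Rightarrow> real) \<Rightarrow> bool" where
  "Dminus _ F \<longleftrightarrow>
     (\<forall>(M :: 'a measure) (X :: nat \<Rightarrow> 'a \<Rightarrow> real) (n :: nat) (\<theta> :: nat \<Rightarrow> real).
        prob_space M \<longrightarrow> n \<ge> 1
        \<longrightarrow> (\<forall>i\<in>{1..n}. \<theta> i \<ge> 0) \<longrightarrow> (\<Sum>i=1..n. \<theta> i) = 1
        \<longrightarrow> (\<forall>i\<in>{1..n}. X i \<in> borel_measurable M)
        \<longrightarrow> prob_space.indep_vars M (\<lambda>_. borel) X {1..n}
        \<longrightarrow> (\<forall>i\<in>{1..n}. \<forall>t. measure M {\<omega> \<in> space M. X i \<omega> \<le> t} = F t)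
        \<longrightarrow> st_le M (X 1) (\<lambda>\<omega>. \<Sum>i=1..n. \<theta> i * X i \<omega>))"

end

theory Submission
  imports Defs "HOL-Real_Asymp.Real_Asymp"
begin


lemma mono_aux:
  fixes f f' :: "real \<Rightarrow> real"
  assumes "\<And>x. 0 \<le> x \<Longrightarrow> x \<le> y \<Longrightarrow> (f has_real_derivative f' x) (at x)"
    and "\<And>x. 0 \<le> x \<Longrightarrow> x \<le> y \<Longrightarrow> f' x \<ge> 0" and "f 0 = 0" and "y \<ge> 0"
  shows "f y \<ge> 0"
proof -
  have "f 0 \<le> f y"
    by (rule DERIV_nonneg_imp_nondecreasing[OF \<open>y \<ge> 0\<close>]) (use assms in auto)
  thus ?thesis using assms by simp
qed

lemma exp_ineq: assumes "(y::real) \<ge> 0" shows "2 * (exp y - 1) \<le> y * (exp y + 1)"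
proof -
  have "(\<lambda>y. y * (exp y + 1) - 2 * (exp y - 1)) y \<ge> 0"
  proof (rule mono_aux[where f="\<lambda>y. y * (exp y + 1) - 2 * (exp y - 1)" and f'="\<lambda>y. 1 - exp y + y * exp y"])
    fix x :: real assume "x \<ge> 0"
    show "((\<lambda>y. y * (exp y + 1) - 2 * (exp y - 1)) has_real_derivative 1 - exp x + x * exp x) (at x)"
      by (rule derivative_eq_intros refl | (simp; fail))+
    have "1 - x \<le> exp (-x)" using exp_ge_add_one_self[of "-x"] by simp
    hence "(1 - x) * exp x \<le> exp (-x) * exp x" by (simp add: mult_right_mono)
    hence "(1 - x) * exp x \<le> 1" by (simp add: exp_minus field_simps)
    thus "1 - exp x + x * exp x \<ge> 0" by (simp add: algebra_simps)
  qed (use assms in auto)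
  thus ?thesis by simp
qed

lemma cos_lb: assumes "(y::real) \<ge> 0" shows "1 - y^2/2 \<le> cos y"
proof -
  have "(\<lambda>y. cos y - 1 + y^2/2) y \<ge> 0"
  proof (rule mono_aux[where f="\<lambda>y. cos y - 1 + y^2/2" and f'="\<lambda>y. y - sin y"])
    fix x :: real assume "x \<ge> 0"
    show "((\<lambda>y. cos y - 1 + y^2/2) has_real_derivative x - sin x) (at x)"
      by (rule derivative_eq_intros refl | (simp; fail))+
    show "x - sin x \<ge> 0" using sin_x_le_x[OF \<open>x \<ge> 0\<close>] by simp
  qed (use assms in auto)
  thus ?thesis by simp
qed

lemma sin_lb: assumes "(y::real) \<ge> 0" shows "y - y^3/6 \<le> sin y"
proof -
  have "(\<lambda>y. sin y - y + y^3/6) y \<ge> 0"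
  proof (rule mono_aux[where f="\<lambda>y. sin y - y + y^3/6" and f'="\<lambda>y. cos y - 1 + y^2/2"])
    fix x :: real assume "x \<ge> 0"
    show "((\<lambda>y. sin y - y + y^3/6) has_real_derivative cos x - 1 + x^2/2) (at x)"
      by (rule derivative_eq_intros refl | (simp; fail))+
    show "cos x - 1 + x^2/2 \<ge> 0" using cos_lb[OF \<open>x \<ge> 0\<close>] by simp
  qed (use assms in auto)
  thus ?thesis by simp
qed

lemma cos_ub: assumes "(y::real) \<ge> 0" shows "cos y \<le> 1 - y^2/2 + y^4/24"
proof -
  have "(\<lambda>y. 1 - y^2/2 + y^4/24 - cos y) y \<ge> 0"
  proof (rule mono_aux[where f="\<lambda>y. 1 - y^2/2 + y^4/24 - cos y" and f'="\<lambda>y. sin y - y + y^3/6"])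
    fix x :: real assume "x \<ge> 0"
    show "((\<lambda>y. 1 - y^2/2 + y^4/24 - cos y) has_real_derivative sin x - x + x^3/6) (at x)"
      by (rule derivative_eq_intros refl | (simp; fail))+
    show "sin x - x + x^3/6 \<ge> 0" using sin_lb[OF \<open>x \<ge> 0\<close>] by simp
  qed (use assms in auto)
  thus ?thesis by simp
qed

lemma ln_ub: assumes "0 \<le> (w::real)" "w < 1" shows "- ln (1 - w) \<le> w + w^2/2 + w^3/(3*(1-w))"
proof -
  have "(\<lambda>w. w + w^2/2 + w^3/(3*(1-w)) + ln (1 - w)) w \<ge> 0"
  proof (rule mono_aux[where f="\<lambda>w. w + w^2/2 + w^3/(3*(1-w)) + ln (1 - w)" and f'="\<lambda>w. w^3/(3*(1-w)^2)"])
    fix x :: real assume x: "0 \<le> x" "x \<le> w"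
    hence x1: "x < 1" using assms by simp
    show "((\<lambda>w. w + w^2/2 + w^3/(3*(1-w)) + ln (1 - w)) has_real_derivative x^3/(3*(1-x)^2)) (at x)"
      apply (insert x1)
      apply (rule derivative_eq_intros refl | (simp; fail))+
      apply (subgoal_tac "1 - x \<noteq> 0")
       apply (simp add: divide_simps)
       apply (simp add: algebra_simps power2_eq_square power3_eq_cube)
      apply simp
      done
    show "x^3/(3*(1-x)^2) \<ge> 0" using x by simp
  qed (use assms in auto)
  thus ?thesis by simp
qed

lemma convex_on_cong':
  assumes "convex_on A f" "\<And>x. x \<in> A \<Longrightarrow> f x = g x"
  shows "convex_on A g"
proof -
  have cA: "convex A" using assms(1) by (rule convex_on_imp_convex)
  show ?thesis using assms cA unfolding convex_on_def
    by (smt (verit, best) convexD)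
qed

lemma convex_comp_mono:
  fixes g h :: "real \<Rightarrow> real"
  assumes g: "convex_on B g" and mono: "\<And>x y. x \<in> B \<Longrightarrow> y \<in> B \<Longrightarrow> x \<le> y \<Longrightarrow> g x \<le> g y"
    and h: "convex_on A h" and hAB: "\<And>x. x \<in> A \<Longrightarrow> h x \<in> B"
  shows "convex_on A (\<lambda>x. g (h x))"
proof (rule convex_onI)
  show "convex A" using h by (rule convex_on_imp_convex)
  have cB: "convex B" using g by (rule convex_on_imp_convex)
  fix t x y :: real assume t: "0 < t" "t < 1" and xy: "x \<in> A" "y \<in> A"
  have m: "(1 - t) *\<^sub>R x + t *\<^sub>R y \<in> A" using convexD[OF \<open>convex A\<close> xy, of "1-t" t] t by simp
  have "h ((1 - t) *\<^sub>R x + t *\<^sub>R y) \<le> (1 - t) * h x + t * h y"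
    using convex_onD[OF h, of t x y] t xy by simp
  moreover have "(1 - t) * h x + t * h y \<in> B"
    using convexD[OF cB hAB[OF xy(1)] hAB[OF xy(2)], of "1-t" t] t by simp
  ultimately have "g (h ((1 - t) *\<^sub>R x + t *\<^sub>R y)) \<le> g ((1 - t) * h x + t * h y)"
    using mono hAB m by blast
  also have "\<dots> \<le> (1 - t) * g (h x) + t * g (h y)"
    using convex_onD[OF g, of t "h x" "h y"] t hAB xy by simp
  finally show "g (h ((1 - t) *\<^sub>R x + t *\<^sub>R y)) \<le> (1 - t) * g (h x) + t * g (h y)" .
qed

lemma dist_fun_bounds:
  assumes "is_dist_fun G" shows "0 \<le> G x" "G x \<le> 1"
proof -
  have m: "mono G" and b: "(G \<longlongrightarrow> 0) at_bot" and t: "(G \<longlongrightarrow> 1) at_top"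
    using assms by (auto simp: is_dist_fun_def)
  show "0 \<le> G x"
    using b by (rule tendsto_upperbound) (auto simp: eventually_at_bot_linorder intro!: exI[of _ x] monoD[OF m])
  show "G x \<le> 1"
    using t by (rule tendsto_lowerbound) (auto simp: eventually_at_top_linorder intro!: exI[of _ x] monoD[OF m])
qed

lemma quantile_set:
  assumes "is_dist_fun G" "0 < u" "u < 1"
  shows "{x. u \<le> G x} \<noteq> {}" "bdd_below {x. u \<le> G x}"
proof -
  have m: "mono G" and b: "(G \<longlongrightarrow> 0) at_bot" and t: "(G \<longlongrightarrow> 1) at_top"
    using assms by (auto simp: is_dist_fun_def)
  have "eventually (\<lambda>x. G x > u) at_top" using order_tendstoD(1)[OF t] assms by auto
  then obtain a where "\<And>x. x \<ge> a \<Longrightarrow> G x > u" by (auto simp: eventually_at_top_linorder)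
  then show "{x. u \<le> G x} \<noteq> {}" by (metis empty_iff less_imp_le mem_Collect_eq order_refl)
  have "eventually (\<lambda>x. G x < u) at_bot" using order_tendstoD(2)[OF b] assms by auto
  then obtain c where c: "\<And>x. x \<le> c \<Longrightarrow> G x < u" by (auto simp: eventually_at_bot_linorder)
  show "bdd_below {x. u \<le> G x}"
  proof (rule bdd_belowI[of _ c])
    fix x assume "x \<in> {x. u \<le> G x}"
    thus "c \<le> x" using c[of x] by force
  qed
qed

lemma quantile_le_iff:
  assumes G: "is_dist_fun G" and u: "0 < u" "u < 1"
  shows "quantile G u \<le> t \<longleftrightarrow> u \<le> G t"
proof
  assume "u \<le> G t"
  thus "quantile G u \<le> t" unfolding quantile_def
    by (intro cInf_lower quantile_set[OF G u]) auto
next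
  assume qt: "quantile G u \<le> t"
  define q where "q = quantile G u"
  have m: "mono G" and rc: "continuous (at_right q) G"
    using G by (auto simp: is_dist_fun_def)
  have ev: "eventually (\<lambda>x. u \<le> G x) (at_right q)"
  proof (rule eventually_at_rightI[of q "q+1"])
    fix x assume "x \<in> {q<..<q+1}"
    hence "Inf {x. u \<le> G x} < x" by (simp add: q_def quantile_def)
    then obtain s where "s \<in> {x. u \<le> G x}" "s < x"
      using cInf_less_iff[OF quantile_set(1,2)[OF G u]] by blast
    thus "u \<le> G x" using monoD[OF m, of s x] by auto
  qed simp
  have "(G \<longlongrightarrow> G q) (at_right q)" using rc by (simp add: continuous_within)
  hence "u \<le> G q" by (rule tendsto_lowerbound[OF _ ev]) simp
  also have "G q \<le> G t" using qt monoD[OF m] by (simp add: q_def)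
  finally show "u \<le> G t" .
qed

lemma quantile_mono:
  assumes G: "is_dist_fun G" and "0 < u" "u \<le> v" "v < 1"
  shows "quantile G u \<le> quantile G v"
proof -
  have "v \<le> G (quantile G v)" using quantile_le_iff[OF G, of v "quantile G v"] assms by simp
  thus ?thesis using quantile_le_iff[OF G, of u "quantile G v"] assms by simp
qed

definition hP :: "real \<Rightarrow> real" where "hP x = 1 / (1 - exp (-1/x))"

lemma expm_bounds: assumes "(x::real) > 0" shows "0 < exp (-1/x)" "exp (-1/x) < 1"
  using assms by auto

lemma hP_convex: "convex_on {0<..} hP"
proof -
  define h' where "h' x = exp(-1/x)/(x^2*(1-exp(-1/x))^2)" for x :: real
  define h'' where "h'' x = exp(-1/x)*(1 + exp(-1/x) - 2*x*(1 - exp(-1/x)))/(x^4*(1 - exp(-1/x))^3)" for x :: real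
  show ?thesis unfolding hP_def
  proof (rule f''_ge0_imp_convex[where f'=h' and f''=h''])
    show "convex {0::real<..}" by simp
  next
    fix x :: real assume "x \<in> {0<..}"
    hence x: "x > 0" by simp
    have e: "exp (-1/x) < 1" using x by simp
    show "((\<lambda>x. 1 / (1 - exp (- 1 / x))) has_real_derivative h' x) (at x)"
      unfolding h'_def
      apply (insert x e)
      apply (rule derivative_eq_intros refl | (simp; fail))+
      apply (subgoal_tac "1 - exp (-1/x) \<noteq> 0")
       apply (simp add: divide_simps)
       apply (simp add: algebra_simps power2_eq_square)
      apply simp
      done
    show "(h' has_real_derivative h'' x) (at x)"
      unfolding h'_def h''_def
      apply (insert x e)
      apply (rule derivative_eq_intros refl | (simp; fail))+
      apply (subgoal_tac "1 - exp (-1/x) \<noteq> 0")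
       apply (simp add: divide_simps)
       apply (simp add: algebra_simps eval_nat_numeral)
      apply simp
      done
    have ineq: "2 * (exp (1/x) - 1) \<le> (1/x) * (exp (1/x) + 1)" using exp_ineq[of "1/x"] x by simp
    have ee: "exp (1/x) * exp (-1/x) = 1" by (simp add: exp_minus[symmetric] exp_add[symmetric])
    have "2 * (exp (1/x) - 1) * (x * exp (-1/x)) \<le> (1/x) * (exp (1/x) + 1) * (x * exp (-1/x))"
      using ineq x by (intro mult_right_mono) auto
    hence "2 * x * (1 - exp (-1/x)) \<le> 1 + exp (-1/x)"
      using x ee by (simp add: algebra_simps)
    thus "0 \<le> h'' x" unfolding h''_def using x e
      by (intro divide_nonneg_pos mult_nonneg_nonneg) auto
  qed
qed

lemma set_FP: "{x. 0 < F_P x \<and> F_P x < 1} = {1<..}"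
  by (auto simp: F_P_def split: if_splits)

lemma set_FF: "{x. 0 < F_F x \<and> F_F x < 1} = {0<..}"
  by (auto simp: F_F_def split: if_splits)

lemma FP_mono: "1 < x \<Longrightarrow> x \<le> y \<Longrightarrow> F_P x \<le> F_P y"
  by (auto simp: F_P_def frac_le)

lemma SP_sub_SF: "S_P \<subseteq> S_F"
proof
  fix G assume "G \<in> S_P"
  hence G: "is_dist_fun G" and cv: "convex_on {1<..} (\<lambda>x. quantile G (F_P x))"
    by (auto simp: skew_class_def skew_le_def set_FP)
  have hgt: "hP x \<in> {1<..}" if "x \<in> {0<..}" for x
  proof -
    have "0 < 1 - exp (-1/x)" "1 - exp (-1/x) < 1" using that by auto
    thus ?thesis by (simp add: hP_def)
  qed
  have "convex_on {0<..} (\<lambda>x. quantile G (F_P (hP x)))"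
  proof (rule convex_comp_mono[OF cv _ hP_convex hgt])
    fix x y :: real assume "x \<in> {1<..}" "y \<in> {1<..}" "x \<le> y"
    hence "0 < F_P x" "F_P y < 1" "F_P x \<le> F_P y" using set_FP FP_mono by auto
    thus "quantile G (F_P x) \<le> quantile G (F_P y)"
      using quantile_mono[OF G] by auto
  qed
  moreover have "F_P (hP x) = F_F x" if "x \<in> {0<..}" for x
    using hgt[OF that] that by (simp add: F_P_def F_F_def hP_def)
  ultimately have "convex_on {0<..} (\<lambda>x. quantile G (F_F x))"
    using convex_on_cong'[of "{0<..}" "\<lambda>x. quantile G (F_P (hP x))" "\<lambda>x. quantile G (F_F x)"] by simp
  thus "G \<in> S_F" using G by (simp add: skew_class_def skew_le_def set_FF)
qed



definition cu :: "real \<Rightarrow> real" where "cu x = arctan x / pi + 1/2"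

lemma cu_pos: "0 < cu x" and cu_lt1: "cu x < 1"
  using arctan_bounded[of x] pi_gt_zero by (auto simp: cu_def field_simps)

lemma ln_cu_neg: "ln (cu x) < 0"
  using cu_pos[of x] cu_lt1[of x] by simp

lemma cu_der[derivative_intros]:
  assumes "(g has_real_derivative g') (at x)"
  shows "((\<lambda>x. cu (g x)) has_real_derivative (g' / (pi*(1+(g x)^2)))) (at x)"
proof -
  have d: "((\<lambda>x. arctan (g x) / pi + 1/2) has_real_derivative (inverse (1 + (g x)^2) * g') / pi + 0) (at x)"
    using DERIV_chain2[OF DERIV_arctan assms] by (intro DERIV_add DERIV_cdivide DERIV_const)
  have eq: "(inverse (1 + (g x)^2) * g') / pi + 0 = g' / (pi*(1+(g x)^2))" by (simp add: field_simps)
  show ?thesis unfolding cu_def using d eq by simp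
qed

lemma poly_ineq:
  assumes "0 < (w::real)" "w \<le> 1/2"
  shows "(w + w^2/2 + w^3/(3*(1-w))) * (1 + 2*(1-w)*(1/w - 3*w)) \<le> 2"
proof -
  have w1: "1 - w \<noteq> 0" "w \<noteq> 0" using assms by auto
  have eq: "(w + w^2/2 + w^3/(3*(1-w))) * (1 + 2*(1-w)*(1/w - 3*w))
      = 2 - w^2*(35/6 - 55/6*w + 2*w^2 + w^3)/(1-w)"
    using w1
    apply (simp add: divide_simps)
    apply (simp add: algebra_simps eval_nat_numeral)
    done
  have "0 \<le> 35/6 - 55/6*w + 2*w^2 + w^3" using assms by (simp add: add_nonneg_nonneg)
  hence "0 \<le> w^2*(35/6 - 55/6*w + 2*w^2 + w^3)/(1-w)" using assms by simp
  thus ?thesis using eq by linarith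
qed

lemma key_ineq: "- ln (cu x) * (1 + 2*pi*x*cu x) \<le> 2"
proof -
  define z where "z = arctan x"
  have zb: "-(pi/2) < z" "z < pi/2" using arctan_bounded[of x] by (auto simp: z_def)
  have cz: "cos z > 0" using zb by (intro cos_gt_zero_pi) auto
  have "x = sin z / cos z" using tan_arctan[of x] by (simp add: z_def tan_def)
  hence xc: "x * cos z = sin z" using cz by (simp add: field_simps)
  have nL: "0 \<le> - ln (cu x)" using ln_cu_neg[of x] by simp
  show ?thesis
  proof (cases "x \<le> 0")
    case True
    have z0: "z \<le> 0" using True arctan_le_iff[of x 0] by (simp add: z_def)
    define s where "s = z + pi/2"
    have s: "0 < s" "s \<le> pi/2" using zb z0 by (auto simp: s_def)
    have us: "cu x = s/pi" by (simp add: cu_def s_def z_def field_simps)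
    have sins: "sin s = cos z" by (simp add: s_def sin_add)
    have coss: "cos s = - sin z" by (simp add: s_def cos_add)
    have b: "1 + 2*pi*x*cu x = 1 + 2* s*x" by (simp add: us)
    show ?thesis
    proof (cases "- ln (cu x) \<le> 2")
      case True
      have b1: "1 + 2* s*x \<le> 1" using s(1) \<open>x \<le> 0\<close> by (simp add: mult_nonneg_nonpos)
      show ?thesis
      proof (cases "0 \<le> 1 + 2* s*x")
        case True
        have "- ln (cu x) * (1 + 2* s*x) \<le> - ln (cu x) * 1"
          by (rule mult_left_mono[OF b1 nL])
        thus ?thesis using \<open>- ln (cu x) \<le> 2\<close> unfolding b by simp
      next
        case False
        have "- ln (cu x) * (1 + 2* s*x) \<le> 0"
          using False by (intro mult_nonneg_nonpos[OF nL]) auto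
        thus ?thesis unfolding b by simp
      qed
    next
      case False
      hence "ln (cu x) < -2" by simp
      hence "cu x < exp (-2)" using cu_pos[of x] by (metis exp_less_mono exp_ln)
      moreover have "exp (-2::real) \<le> 1/4"
      proof -
        have "(2::real) \<le> exp 1" using exp_ge_add_one_self[of 1] by simp
        hence "2*2 \<le> exp (1::real) * exp 1" by (intro mult_mono) auto
        hence "4 \<le> exp (2::real)" by (simp add: exp_add[symmetric])
        thus ?thesis by (simp add: exp_minus field_simps)
      qed
      ultimately have "cu x < 1/4" by simp
      hence "pi * cu x < pi * (1/4)" by (intro mult_strict_left_mono) auto
      hence "s < pi/4" using us by simp
      hence s1: "s < 1" using pi_less_4 by simp
      have sinpos: "sin s > 0" using s by (intro sin_gt_zero) auto
      have "(1 + 2* s*x) * sin s = sin s - 2* s*cos s"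
        using xc sins coss by (simp add: algebra_simps)
      also have "\<dots> \<le> s - 2* s*(1 - s^2/2)"
        using sin_x_le_x[of s] cos_lb[of s] s by (smt (verit) mult_left_mono)
      also have "\<dots> = s * (s^2 - 1)" by (simp add: algebra_simps power2_eq_square)
      also have "\<dots> \<le> 0" using s s1 by (intro mult_nonneg_nonpos) (auto simp: power_le_one)
      finally have "1 + 2* s*x \<le> 0" using sinpos by (smt (verit) mult_pos_pos)
      hence "- ln (cu x) * (1 + 2* s*x) \<le> 0" by (intro mult_nonneg_nonpos[OF nL]) auto
      thus ?thesis unfolding b by simp
    qed
  next
    case False
    hence z0: "0 < z" using arctan_less_iff[of 0 x] by (simp add: z_def)
    define y where "y = pi/2 - z"
    have y: "0 < y" "y < pi/2" using zb z0 by (auto simp: y_def)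
    define w where "w = y / pi"
    have w: "0 < w" "w < 1/2" using y by (auto simp: w_def field_simps)
    have uw: "cu x = 1 - w" by (simp add: cu_def w_def y_def z_def field_simps)
    have siny: "sin y = cos z" by (simp add: y_def sin_diff)
    have cosy: "cos y = sin z" by (simp add: y_def cos_diff)
    have sinpos: "sin y > 0" using y by (intro sin_gt_zero) auto
    have xs: "x * sin y = cos y" using xc siny cosy by simp
    have b: "1 + 2*pi*x*cu x = 1 + 2*x*(pi - y)" by (simp add: uw w_def field_simps)
    show ?thesis
    proof (cases "1 + 2*x*(pi - y) \<le> 0")
      case True
      hence "- ln (cu x) * (1 + 2*x*(pi - y)) \<le> 0" by (intro mult_nonneg_nonpos[OF nL]) auto
      thus ?thesis unfolding b by simp
    next
      case False
      define A where "A = w + w^2/2 + w^3/(3*(1-w))"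
      define B where "B = 1 + 2*(1-w)*(1/w - 3*w)"
      have LA: "- ln (cu x) \<le> A" unfolding uw A_def using ln_ub[of w] w by simp
      have y2: "y^2 < 3"
      proof -
        have "y < 8/5" using y pi_approx by simp
        hence "y^2 < (8/5)^2" using y by (intro power_strict_mono) auto
        moreover have "(8/5::real)^2 < 3" by (simp add: power2_eq_square)
        ultimately show ?thesis by linarith
      qed
      have "3*y*cos y \<le> 3*y*(1 - y^2/2 + y^4/24)"
        using cos_ub[of y] y by (intro mult_left_mono) auto
      also have "\<dots> \<le> (3 - y^2)*(y - y^3/6)"
      proof -
        have "(3 - y^2)*(y - y^3/6) - 3*y*(1 - y^2/2 + y^4/24) = y^5/24"
          by (simp add: algebra_simps eval_nat_numeral divide_simps)
        moreover have "0 \<le> y^5" using y by simp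
        ultimately show ?thesis by linarith
      qed
      also have "\<dots> \<le> (3 - y^2) * sin y"
        using sin_lb[of y] y y2 by (intro mult_left_mono) auto
      finally have cyb: "3*y*cos y \<le> (3 - y^2) * sin y" .
      have "x * (3*y* sin y) = 3*y*(x * sin y)" by (simp add: mult_ac)
      also have "\<dots> = 3*y*cos y" using xs by simp
      also have "\<dots> \<le> (3 - y^2) * sin y" by (rule cyb)
      finally have "x * (3*y* sin y) \<le> (3 - y^2) * sin y" .
      hence "x * (3*y) \<le> 3 - y^2" using sinpos by (simp add: mult.assoc[symmetric])
      hence xb: "x \<le> 1/y - y/3" using y by (simp add: field_simps power2_eq_square)
      have "x*(pi - y) \<le> (1/y - y/3)*(pi - y)"
        by (rule mult_right_mono[OF xb]) (use y in linarith)
      hence "1 + 2*x*(pi - y) \<le> 1 + 2*(1/y - y/3)*(pi - y)" by linarith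
      also have "\<dots> = 1 + 2*(1-w)*(1/w - pi^2*w/3)"
      proof -
        have yw: "y = pi * w" by (simp add: w_def)
        have "(1/y - y/3)*(pi - y) = (1/(pi*w) - pi*w/3) * (pi*(1-w))" by (simp add: yw algebra_simps)
        also have "\<dots> = (1-w)*(1/w - pi^2*w/3)" using w
          by (simp add: divide_simps) (simp add: algebra_simps power2_eq_square)
        finally have E: "(1/y - y/3)*(pi - y) = (1-w)*(1/w - pi^2*w/3)" .
        show ?thesis by (simp only: mult.assoc E)
      qed
      also have "\<dots> \<le> B"
      proof -
        have "3*3 < pi*pi" by (rule mult_strict_mono) (use pi_gt3 in auto)
        hence p9: "9 \<le> pi^2" by (simp add: power2_eq_square)
        have "9 * (w/3) \<le> pi^2 * (w/3)" by (rule mult_right_mono[OF p9]) (use w in auto)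
        hence "1/w - pi^2*w/3 \<le> 1/w - 3*w" by simp
        hence "(1-w)*(1/w - pi^2*w/3) \<le> (1-w)*(1/w - 3*w)"
          by (rule mult_left_mono) (use w in auto)
        thus ?thesis unfolding B_def by linarith
      qed
      finally have bB: "1 + 2*x*(pi - y) \<le> B" .
      have A0: "0 \<le> A" using LA nL by linarith
      have "- ln (cu x) * (1 + 2*x*(pi - y)) \<le> A * (1 + 2*x*(pi - y))"
        by (rule mult_right_mono[OF LA]) (use False in auto)
      also have "\<dots> \<le> A * B"
        by (rule mult_left_mono[OF bB A0])
      also have "\<dots> \<le> 2" unfolding A_def B_def by (rule poly_ineq) (use w in auto)
      finally show ?thesis unfolding b by simp
    qed
  qed
qed

definition kC :: "real \<Rightarrow> real" where "kC x = - 1 / ln (cu x)"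

lemma kC_convex: "convex_on UNIV kC"
proof -
  define D where "D x = pi*(1+x^2)*cu x*(ln (cu x))^2" for x
  define k' where "k' x = 1 / D x" for x
  define k'' where "k'' x = - (ln (cu x)*(ln (cu x)*(1+2*pi*x*cu x)+2)) / (D x)^2" for x
  show ?thesis unfolding kC_def
  proof (rule f''_ge0_imp_convex[where f'=k' and f''=k''])
    fix x :: real
    have c: "0 < cu x" "ln (cu x) \<noteq> 0" "0 < 1 + x^2"
      using cu_pos[of x] ln_cu_neg[of x] by (auto simp: add_pos_nonneg)
    show "((\<lambda>x. - 1 / ln (cu x)) has_real_derivative k' x) (at x)"
      unfolding k'_def D_def
      apply (insert c)
      apply (rule derivative_eq_intros refl | (simp; fail))+
      apply (simp add: divide_simps)
      apply (simp add: algebra_simps eval_nat_numeral)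
      done
    show "(k' has_real_derivative k'' x) (at x)"
      unfolding k'_def k''_def D_def
      apply (insert c)
      apply (rule derivative_eq_intros refl | (simp; fail))+
      apply (simp add: divide_simps)
      apply (simp add: algebra_simps eval_nat_numeral)
      done
    have "0 \<le> ln (cu x) * (1 + 2*pi*x*cu x) + 2" using key_ineq[of x] by simp
    hence nn: "0 \<le> - ln (cu x) * (ln (cu x) * (1 + 2*pi*x*cu x) + 2)"
      using ln_cu_neg[of x] by (intro mult_nonneg_nonneg) auto
    thus "0 \<le> k'' x" unfolding k''_def using divide_nonneg_nonneg[OF nn zero_le_power2[of "D x"]] by simp
  qed simp
qed

lemma set_FC: "{x. 0 < F_C x \<and> F_C x < 1} = UNIV"
  using cu_pos cu_lt1 by (auto simp: F_C_def cu_def)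

lemma FF_mono: "0 < x \<Longrightarrow> x \<le> y \<Longrightarrow> F_F x \<le> F_F y"
  by (auto simp: F_F_def divide_simps)

lemma SF_sub_SC: "S_F \<subseteq> S_C"
proof
  fix G assume "G \<in> S_F"
  hence G: "is_dist_fun G" and cv: "convex_on {0<..} (\<lambda>x. quantile G (F_F x))"
    by (auto simp: skew_class_def skew_le_def set_FF)
  have kpos: "kC x \<in> {0<..}" for x
    using ln_cu_neg[of x] by (simp add: kC_def divide_simps)
  have "convex_on UNIV (\<lambda>x. quantile G (F_F (kC x)))"
  proof (rule convex_comp_mono[OF cv _ kC_convex kpos])
    fix x y :: real assume "x \<in> {0<..}" "y \<in> {0<..}" "x \<le> y"
    hence "0 < F_F x" "F_F y < 1" "F_F x \<le> F_F y" using set_FF FF_mono by auto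
    thus "quantile G (F_F x) \<le> quantile G (F_F y)"
      using quantile_mono[OF G] by auto
  qed
  moreover have "F_F (kC x) = F_C x" for x
    using kpos[of x] ln_cu_neg[of x] cu_pos[of x] by (simp add: F_F_def kC_def F_C_def cu_def[symmetric])
  ultimately have "convex_on UNIV (\<lambda>x. quantile G (F_C x))"
    using convex_on_cong'[of UNIV "\<lambda>x. quantile G (F_F (kC x))" "\<lambda>x. quantile G (F_C x)"] by simp
  thus "G \<in> S_C" using G by (simp add: skew_class_def skew_le_def set_FC)
qed



definition cd :: "real \<Rightarrow> real \<Rightarrow> real" where "cd s x = s / (pi * (s^2 + x^2))"

lemma cd_pos: "0 < s \<Longrightarrow> 0 < cd s x"
  by (simp add: cd_def add_pos_nonneg)

lemma cd_borel[measurable]: "cd s \<in> borel_measurable borel"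
  unfolding cd_def by measurable

lemma nn_FTC_line:
  fixes f F :: "real \<Rightarrow> real"
  assumes f_borel[measurable]: "f \<in> borel_measurable borel"
  assumes f: "\<And>x. DERIV F x :> f x"
  assumes nonneg: "\<And>x. 0 \<le> f x"
  assumes limb: "(F \<longlongrightarrow> A) at_bot" and limt: "(F \<longlongrightarrow> B) at_top"
  shows "(\<integral>\<^sup>+x. ennreal (f x) \<partial>lborel) = B - A"
proof -
  let ?f = "\<lambda>(i::nat) (x::real). ennreal (f x) * indicator {- real i .. real i} x"
  have F_mono: "x \<le> y \<Longrightarrow> F x \<le> F y" for x y
    using f nonneg by (intro DERIV_nonneg_imp_nondecreasing[of x y F]) auto
  have F_le_B: "F x \<le> B" for x
    by (intro tendsto_lowerbound[OF limt]) (auto simp: eventually_at_top_linorder intro!: exI[of _ x] F_mono)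
  have F_ge_A: "A \<le> F x" for x
    by (intro tendsto_upperbound[OF limb]) (auto simp: eventually_at_bot_linorder intro!: exI[of _ x] F_mono)
  have "(SUP i. ?f i x) = ennreal (f x)" for x
  proof (rule LIMSEQ_unique[OF LIMSEQ_SUP])
    obtain n where "\<bar>x\<bar> < real n"
      using reals_Archimedean2[of "\<bar>x\<bar>"] ..
    then have "eventually (\<lambda>n. ?f n x = ennreal (f x)) sequentially"
    proof (intro eventually_sequentiallyI[where c=n])
      fix m :: nat assume "\<bar>x\<bar> < real n" "n \<le> m"
      hence "\<bar>x\<bar> \<le> real m" by linarith
      hence "x \<in> {- real m .. real m}" by (auto simp: abs_le_iff)
      thus "?f m x = ennreal (f x)" by simp
    qed
    then show "(\<lambda>n. ?f n x) \<longlonglongrightarrow> ennreal (f x)"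
      by (rule tendsto_eventually)
  qed (auto simp: nonneg incseq_def le_fun_def split: split_indicator)
  then have "integral\<^sup>N lborel (\<lambda>x. ennreal (f x)) = (\<integral>\<^sup>+ x. (SUP i. ?f i x) \<partial>lborel)"
    by simp
  also have "\<dots> = (SUP i. (\<integral>\<^sup>+ x. ?f i x \<partial>lborel))"
  proof (rule nn_integral_monotone_convergence_SUP)
    show "incseq ?f"
      using nonneg by (auto simp: incseq_def le_fun_def split: split_indicator)
  qed simp
  also have "\<dots> = (SUP i::nat. ennreal (F (real i) - F (- real i)))"
    by (subst nn_integral_FTC_Icc[OF f_borel f nonneg]) auto
  also have "\<dots> = B - A"
  proof (rule LIMSEQ_unique[OF LIMSEQ_SUP])
    have "(\<lambda>n. F (real n)) \<longlonglongrightarrow> B"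
      by (intro filterlim_compose[OF limt] filterlim_real_sequentially)
    moreover have "(\<lambda>n. F (- real n)) \<longlonglongrightarrow> A"
      by (intro filterlim_compose[OF limb] filterlim_compose[OF filterlim_uminus_at_bot_at_top] filterlim_real_sequentially)
    ultimately show "(\<lambda>n. ennreal (F (real n) - F (- real n))) \<longlonglongrightarrow> ennreal (B - A)"
      by (intro tendsto_ennrealI tendsto_diff)
  qed (auto simp: incseq_def intro!: ennreal_le_iff[THEN iffD2] F_mono diff_mono)
  finally show ?thesis .
qed

lemma nn_FTC_atMost:
  fixes f F :: "real \<Rightarrow> real"
  assumes f_borel[measurable]: "f \<in> borel_measurable borel"
  assumes f: "\<And>x. DERIV F x :> f x"
  assumes nonneg: "\<And>x. 0 \<le> f x"
  assumes limb: "(F \<longlongrightarrow> A) at_bot"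
  shows "(\<integral>\<^sup>+x. ennreal (f x) * indicator {..b} x \<partial>lborel) = F b - A"
proof -
  let ?f = "\<lambda>(i::nat) (x::real). ennreal (f x) * indicator {b - real i .. b} x"
  have F_mono: "x \<le> y \<Longrightarrow> F x \<le> F y" for x y
    using f nonneg by (intro DERIV_nonneg_imp_nondecreasing[of x y F]) auto
  have F_ge_A: "A \<le> F x" for x
    by (intro tendsto_upperbound[OF limb]) (auto simp: eventually_at_bot_linorder intro!: exI[of _ x] F_mono)
  have "(SUP i. ?f i x) = ennreal (f x) * indicator {..b} x" for x
  proof (rule LIMSEQ_unique[OF LIMSEQ_SUP])
    obtain n where "b - x < real n"
      using reals_Archimedean2[of "b - x"] ..
    then have "eventually (\<lambda>n. ?f n x = ennreal (f x) * indicator {..b} x) sequentially"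
    proof (intro eventually_sequentiallyI[where c=n])
      fix m :: nat assume "b - x < real n" "n \<le> m"
      hence "b - real m \<le> x" by linarith
      thus "?f m x = ennreal (f x) * indicator {..b} x" by (simp add: indicator_def)
    qed
    then show "(\<lambda>n. ?f n x) \<longlonglongrightarrow> ennreal (f x) * indicator {..b} x"
      by (rule tendsto_eventually)
  qed (auto simp: nonneg incseq_def le_fun_def split: split_indicator)
  then have "(\<integral>\<^sup>+x. ennreal (f x) * indicator {..b} x \<partial>lborel) = (\<integral>\<^sup>+ x. (SUP i. ?f i x) \<partial>lborel)"
    by simp
  also have "\<dots> = (SUP i. (\<integral>\<^sup>+ x. ?f i x \<partial>lborel))"
  proof (rule nn_integral_monotone_convergence_SUP)
    show "incseq ?f"
      using nonneg by (auto simp: incseq_def le_fun_def split: split_indicator)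
  qed simp
  also have "\<dots> = (SUP i::nat. ennreal (F b - F (b - real i)))"
    by (subst nn_integral_FTC_Icc[OF f_borel f nonneg]) auto
  also have "\<dots> = F b - A"
  proof (rule LIMSEQ_unique[OF LIMSEQ_SUP])
    have "filterlim (\<lambda>n. -b + real n) at_top sequentially"
      by (rule filterlim_tendsto_add_at_top[OF tendsto_const filterlim_real_sequentially])
    hence "filterlim (\<lambda>n. - (-b + real n)) at_bot sequentially"
      by (rule filterlim_compose[OF filterlim_uminus_at_bot_at_top])
    hence "filterlim (\<lambda>n. b - real n) at_bot sequentially" by simp
    hence "(\<lambda>n. F (b - real n)) \<longlonglongrightarrow> A"
      by (rule filterlim_compose[OF limb])
    then show "(\<lambda>n. ennreal (F b - F (b - real n))) \<longlonglongrightarrow> ennreal (F b - A)"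
      by (intro tendsto_ennrealI tendsto_diff tendsto_const)
  qed (auto simp: incseq_def intro!: ennreal_le_iff[THEN iffD2] F_mono diff_mono)
  finally show ?thesis .
qed

lemma cauchy_deriv: "DERIV (\<lambda>x. arctan x / pi + 1/2) x :> cd 1 x"
  unfolding cd_def
  by (rule derivative_eq_intros refl | (simp; fail))+ (simp add: divide_simps)

lemma FC_lim_bot: "((\<lambda>x. arctan x / pi + 1/2) \<longlongrightarrow> 0) at_bot"
  by real_asymp

lemma FC_lim_top: "((\<lambda>x. arctan x / pi + 1/2) \<longlongrightarrow> 1) at_top"
  by real_asymp

lemma cauchy_total: "(\<integral>\<^sup>+x. ennreal (cd 1 x) \<partial>lborel) = 1"
  using nn_FTC_line[OF cd_borel cauchy_deriv _ FC_lim_bot FC_lim_top] cd_pos[of 1] by (simp add: less_imp_le)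

lemma cauchy_cdf: "(\<integral>\<^sup>+x. ennreal (cd 1 x) * indicator {..t} x \<partial>lborel) = ennreal (F_C t)"
  using nn_FTC_atMost[OF cd_borel cauchy_deriv _ FC_lim_bot, of t] cd_pos[of 1]
  by (simp add: less_imp_le F_C_def)

lemma frac_aux:
  fixes D p q x y K W :: real
  assumes "D \<noteq> 0" "p \<noteq> 0" "q \<noteq> 0" "D = (2*x*y + K)*q + (W - 2*x*(y-x))*p"
  shows "((2*x/D)*y + K/D)/p + (W/D - (2*x/D)*(y-x))/q = 1/(p*q)"
proof -
  have "((2*x/D)*y + K/D)/p + (W/D - (2*x/D)*(y-x))/q = ((2*x*y + K)*q + (W - 2*x*(y-x))*p)/(D*p*q)"
    using assms(1-3) by (simp add: field_simps)
  also have "\<dots> = D/(D*p*q)" using assms(4) by simp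
  also have "\<dots> = 1/(p*q)" using assms(1) by simp
  finally show ?thesis .
qed

lemma pf_ident:
  fixes a b x y :: real
  assumes D: "K^2 + 4*x^2*b^2 \<noteq> 0" and K: "K = x^2 + a^2 - b^2" and b: "b^2 + y^2 \<noteq> 0" and a: "a^2 + (y-x)^2 \<noteq> 0"
  shows "((2*x/(K^2 + 4*x^2*b^2))*y + K/(K^2 + 4*x^2*b^2))/(b^2+y^2)
     + ((x^2 - a^2 + b^2)/(K^2 + 4*x^2*b^2) - (2*x/(K^2 + 4*x^2*b^2))*(y-x))/(a^2+(y-x)^2)
     = 1/((b^2+y^2)*(a^2+(y-x)^2))"
proof -
  have poly: "K^2 + 4*x^2*b^2 = (2*x*y + K)*(a^2+(y-x)^2) + ((x^2-a^2+b^2) - 2*x*(y-x))*(b^2+y^2)"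
    unfolding K by (simp add: algebra_simps power2_eq_square)
  show ?thesis by (rule frac_aux[OF D b a poly])
qed

lemma psi_deriv:
  fixes a b x y P Q S :: real
  assumes "a > 0" "b > 0"
  shows "((\<lambda>y. P/2*(ln(b^2+y^2) - ln(a^2+(y-x)^2)) + Q/b*arctan(y/b) + S/a*arctan((y-x)/a))
     has_real_derivative (P*y+Q)/(b^2+y^2) + (S - P*(y-x))/(a^2+(y-x)^2)) (at y)"
proof -
  have p: "0 < b^2+y^2" "0 < a^2+(y-x)^2" using assms by (auto simp: add_pos_nonneg)
  show ?thesis
    apply (insert p assms)
    apply (rule derivative_eq_intros refl | (simp; fail))+
    apply (simp add: divide_simps)
    apply (simp add: algebra_simps power2_eq_square)
    done
qed



lemma cancel_aux:
  fixes u c p d :: real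
  assumes "c \<noteq> 0" "d \<noteq> 0" "p \<noteq> 0"
  shows "u*c/(p*(d*c)) = u/(p*d)"
  using assms by (simp add: field_simps)

lemma conv_cd:
  fixes a b x :: real
  assumes a: "a > 0" and b: "b > 0" and x: "x \<noteq> 0"
  shows "(\<integral>\<^sup>+y. ennreal (cd a (x - y) * cd b y) \<partial>lborel) = ennreal (cd (a+b) x)"
proof -
  define K where "K = x^2 + a^2 - b^2"
  define D where "D = K^2 + 4*x^2*b^2"
  define P where "P = 2*x/D"
  define Q where "Q = K/D"
  define S where "S = (x^2 - a^2 + b^2)/D"
  have D0: "D > 0" unfolding D_def using x b by (intro add_nonneg_pos) auto
  define \<Psi> where "\<Psi> y = P/2*(ln(b^2+y^2) - ln(a^2+(y-x)^2)) + Q/b*arctan(y/b) + S/a*arctan((y-x)/a)" for y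
  define F where "F y = (a*b/pi^2) * \<Psi> y" for y
  have dF: "DERIV F y :> cd a (x - y) * cd b y" for y
  proof -
    have p: "0 < b^2+y^2" "0 < a^2+(y-x)^2" using a b by (auto simp: add_pos_nonneg)
    have d: "DERIV \<Psi> y :> (P*y+Q)/(b^2+y^2) + (S - P*(y-x))/(a^2+(y-x)^2)"
      unfolding \<Psi>_def by (rule psi_deriv[OF a b])
    have pf: "(P*y+Q)/(b^2+y^2) + (S - P*(y-x))/(a^2+(y-x)^2) = 1/((b^2+y^2)*(a^2+(y-x)^2))"
      unfolding P_def Q_def S_def D_def
      by (rule pf_ident) (use D0 p in \<open>auto simp: D_def K_def\<close>)
    have sq: "(x - y)^2 = (y - x)^2" by (simp add: power2_commute)
    have "cd a (x - y) * cd b y = (a*b/pi^2) * (1/((b^2+y^2)*(a^2+(y-x)^2)))"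
      unfolding cd_def sq by (simp add: field_simps power2_eq_square)
    thus ?thesis unfolding F_def using DERIV_cmult[OF d, of "a*b/pi^2"] pf by simp
  qed
  have l1t: "((\<lambda>y. ln(b^2+y^2) - ln(a^2+(y-x)^2)) \<longlongrightarrow> 0) at_top" using a b by real_asymp
  have l1b: "((\<lambda>y. ln(b^2+y^2) - ln(a^2+(y-x)^2)) \<longlongrightarrow> 0) at_bot" using a b by real_asymp
  have l2t: "((\<lambda>y. arctan(y/b)) \<longlongrightarrow> pi/2) at_top" using b by real_asymp
  have l2b: "((\<lambda>y. arctan(y/b)) \<longlongrightarrow> -(pi/2)) at_bot" using b by real_asymp
  have l3t: "((\<lambda>y. arctan((y-x)/a)) \<longlongrightarrow> pi/2) at_top" using a by real_asymp
  have l3b: "((\<lambda>y. arctan((y-x)/a)) \<longlongrightarrow> -(pi/2)) at_bot" using a by real_asymp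
  have Lt: "(F \<longlongrightarrow> (a*b/pi^2) * (P/2*0 + Q/b*(pi/2) + S/a*(pi/2))) at_top"
    unfolding F_def \<Psi>_def by (intro tendsto_intros l1t l2t l3t)
  have Lb: "(F \<longlongrightarrow> (a*b/pi^2) * (P/2*0 + Q/b*(-(pi/2)) + S/a*(-(pi/2)))) at_bot"
    unfolding F_def \<Psi>_def by (intro tendsto_intros l1b l2b l3b)
  have nonneg: "0 \<le> cd a (x - y) * cd b y" for y
    using cd_pos[OF a] cd_pos[OF b] by (simp add: less_imp_le)
  have I: "(\<integral>\<^sup>+y. ennreal (cd a (x - y) * cd b y) \<partial>lborel) =
      ennreal ((a*b/pi^2) * (P/2*0 + Q/b*(pi/2) + S/a*(pi/2)) - (a*b/pi^2) * (P/2*0 + Q/b*(-(pi/2)) + S/a*(-(pi/2))))"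
    by (rule nn_FTC_line[OF _ dF nonneg Lb Lt]) simp
  have e1: "a*K + b*(x^2 - a^2 + b^2) = (a+b)*(x^2 + (a-b)^2)"
    unfolding K_def by (simp add: algebra_simps power2_eq_square)
  have e2: "D = (x^2+(a+b)^2)*(x^2+(a-b)^2)"
    unfolding D_def K_def by (simp add: algebra_simps power2_eq_square)
  have n1: "x^2 + (a-b)^2 > 0" "x^2+(a+b)^2 > 0" using x by (auto simp: add_pos_nonneg)
  have "(a*b/pi^2) * (P/2*0 + Q/b*(pi/2) + S/a*(pi/2)) - (a*b/pi^2) * (P/2*0 + Q/b*(-(pi/2)) + S/a*(-(pi/2)))
      = (a*K + b*(x^2 - a^2 + b^2)) / (pi * D)"
    unfolding Q_def S_def using a b D0 by (simp add: field_simps power2_eq_square)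
  also have "\<dots> = ((a+b)*(x^2 + (a-b)^2)) / (pi * ((x^2+(a+b)^2)*(x^2+(a-b)^2)))"
    by (simp only: e1 e2)
  also have "\<dots> = (a+b) / (pi * (x^2+(a+b)^2))"
    by (rule cancel_aux) (use n1 in auto)
  also have "\<dots> = cd (a+b) x" by (simp add: cd_def add.commute)
  finally show ?thesis using I by simp
qed

lemma (in prob_space) sum_cd:
  assumes indep: "indep_var borel X borel Y" and a: "a > 0" and b: "b > 0"
  assumes X: "distributed M lborel X (\<lambda>x. ennreal (cd a x))"
  assumes Y: "distributed M lborel Y (\<lambda>x. ennreal (cd b x))"
  shows "distributed M lborel (\<lambda>\<omega>. X \<omega> + Y \<omega>) (\<lambda>x. ennreal (cd (a+b) x))"
proof -
  have D: "distributed M lborel (\<lambda>\<omega>. X \<omega> + Y \<omega>) (\<lambda>x. \<integral>\<^sup>+y. ennreal (cd a (x - y)) * ennreal (cd b y) \<partial>lborel)"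
    by (rule distributed_convolution[OF indep X Y])
  have g: "(\<lambda>x. \<integral>\<^sup>+y. ennreal (cd a (x - y)) * ennreal (cd b y) \<partial>lborel) \<in> borel_measurable lborel"
    using D by (simp add: distributed_def)
  have AE: "AE x in lborel. (\<integral>\<^sup>+y. ennreal (cd a (x - y)) * ennreal (cd b y) \<partial>lborel) = ennreal (cd (a+b) x)"
    using AE_lborel_singleton[of 0]
  proof eventually_elim
    case (elim x)
    have "(\<integral>\<^sup>+y. ennreal (cd a (x - y)) * ennreal (cd b y) \<partial>lborel) = (\<integral>\<^sup>+y. ennreal (cd a (x - y) * cd b y) \<partial>lborel)"
      using cd_pos[OF a] cd_pos[OF b] by (intro nn_integral_cong) (simp add: ennreal_mult less_imp_le)
    also have "\<dots> = ennreal (cd (a+b) x)" by (rule conv_cd[OF a b elim])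
    finally show ?case .
  qed
  have m: "(\<lambda>x. ennreal (cd (a+b) x)) \<in> borel_measurable lborel" by simp
  show ?thesis by (rule iffD1[OF distributed_cong_density[OF AE m g] D])
qed

lemma (in prob_space) scale_cd:
  assumes X: "distributed M lborel X (\<lambda>x. ennreal (cd 1 x))" and t: "t > 0"
  shows "distributed M lborel (\<lambda>\<omega>. t * X \<omega>) (\<lambda>x. ennreal (cd t x))"
proof (rule distributed_affineI[where c=t and t=0])
  have eq: "(\<lambda>x. ennreal \<bar>t\<bar> * ennreal (cd t (x * t + 0))) = (\<lambda>x. ennreal (cd 1 x))"
  proof
    fix x
    have h: "t^2 + (x*t)^2 = t^2 * (1 + x^2)" by (simp add: algebra_simps power2_eq_square)
    have nz: "1 + x^2 \<noteq> 0" by (smt (verit) zero_le_power2)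
    have "\<bar>t\<bar> * cd t (x * t + 0) = t * t / (pi * (t^2 * (1 + x^2)))" using t
      by (simp add: cd_def h)
    also have "\<dots> = cd 1 x" using nz t by (simp add: cd_def power2_eq_square)
    finally have "\<bar>t\<bar> * cd t (x * t + 0) = cd 1 x" .
    thus "ennreal \<bar>t\<bar> * ennreal (cd t (x * t + 0)) = ennreal (cd 1 x)"
      using t cd_pos[OF t] by (simp add: ennreal_mult[symmetric] less_imp_le)
  qed
  have eq2: "(\<lambda>\<omega>. (t * X \<omega> - 0) / t) = X" using t by auto
  show "distributed M lborel (\<lambda>\<omega>. (t * X \<omega> - 0) / t) (\<lambda>x. ennreal \<bar>t\<bar> * ennreal (cd t (x * t + 0)))"
    unfolding eq eq2 by (rule X)
qed (use t in auto)

lemma (in prob_space) sum_cd_n: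
  assumes "finite I" "I \<noteq> {}" "indep_vars (\<lambda>i. borel) X I"
  assumes "\<And>i. i \<in> I \<Longrightarrow> 0 < s i"
  assumes "\<And>i. i \<in> I \<Longrightarrow> distributed M lborel (X i) (\<lambda>x. ennreal (cd (s i) x))"
  shows "distributed M lborel (\<lambda>x. \<Sum>i\<in>I. X i x) (\<lambda>x. ennreal (cd (\<Sum>i\<in>I. s i) x))"
  using assms
proof (induct I rule: finite_ne_induct)
  case (singleton i) then show ?case by simp
next
  case (insert i I)
  have 1: "distributed M lborel (\<lambda>x. X i x + (\<Sum>i\<in>I. X i x)) (\<lambda>x. ennreal (cd (s i + sum s I) x))"
  proof (rule sum_cd)
    show "indep_var borel (X i) borel (\<lambda>\<omega>. \<Sum>i\<in>I. X i \<omega>)"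
      by (rule indep_vars_sum) (use insert in auto)
    show "0 < sum s I" using insert by (intro sum_pos) auto
    show "distributed M lborel (\<lambda>x. \<Sum>i\<in>I. X i x) (\<lambda>x. ennreal (cd (sum s I) x))"
      using insert by (auto intro: indep_vars_subset)
  qed (use insert in auto)
  have 2: "(\<lambda>x. X i x + (\<Sum>i\<in>I. X i x)) = (\<lambda>x. \<Sum>j\<in>insert i I. X j x)"
    "s i + sum s I = sum s (insert i I)" using insert by auto
  show ?case using 1 unfolding 2 .
qed



definition Mc :: "real measure" where "Mc = density lborel (\<lambda>x. ennreal (cd 1 x))"

lemma Mc_sets[simp, measurable_cong]: "sets Mc = sets borel"
  by (simp add: Mc_def)

lemma Mc_space[simp]: "space Mc = UNIV"
  by (simp add: Mc_def)

lemma Mc_emeasure_atMost: "emeasure Mc {..t} = ennreal (F_C t)"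
  unfolding Mc_def by (subst emeasure_density) (auto simp: cauchy_cdf)

lemma Mc_prob: "prob_space Mc"
proof (rule prob_spaceI)
  show "emeasure Mc (space Mc) = 1"
    unfolding Mc_def by (subst emeasure_density) (auto simp: cauchy_total)
qed

lemma FC_pos: "0 < F_C x" and FC_lt1: "F_C x < 1"
  using set_FC by auto

lemma Mc_FC_le:
  assumes u: "0 < u" "u < 1"
  shows "measure Mc {x. F_C x \<le> u} = u"
proof -
  interpret prob_space Mc by (rule Mc_prob)
  define c0 where "c0 = tan (pi*(u - 1/2))"
  have "-(pi/2) < pi*(u - 1/2)" "pi*(u - 1/2) < pi/2" using u by (auto simp: algebra_simps)
  hence ac: "arctan c0 = pi*(u - 1/2)" unfolding c0_def by (rule arctan_tan)
  hence Fc0: "F_C c0 = u" by (simp add: F_C_def)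
  have "{x. F_C x \<le> u} = {..c0}"
  proof -
    have "F_C x \<le> u \<longleftrightarrow> x \<le> c0" for x
    proof -
      have "F_C x \<le> u \<longleftrightarrow> arctan x \<le> arctan c0"
        unfolding ac using pi_gt_zero by (simp add: F_C_def field_simps)
      thus ?thesis by (simp add: arctan_le_iff)
    qed
    thus ?thesis by auto
  qed
  moreover have "measure Mc {..c0} = F_C c0"
    using Mc_emeasure_atMost[of c0] FC_pos[of c0] by (simp add: measure_def)
  ultimately show ?thesis using Fc0 by simp
qed

lemma Mc_phi:
  assumes G: "is_dist_fun G"
  shows "measure Mc {x. quantile G (F_C x) \<le> t} = G t"
proof -
  interpret prob_space Mc by (rule Mc_prob)
  have eq: "{x. quantile G (F_C x) \<le> t} = {x. F_C x \<le> G t}"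
    using quantile_le_iff[OF G FC_pos FC_lt1] by auto
  have b: "0 \<le> G t" "G t \<le> 1" using dist_fun_bounds[OF G] by auto
  show ?thesis
  proof (cases "G t = 0")
    case True
    hence "{x. F_C x \<le> G t} = {}" using FC_pos by (auto simp: not_le)
    thus ?thesis using eq True by simp
  next
    case False
    show ?thesis
    proof (cases "G t = 1")
      case True
      hence "{x. F_C x \<le> G t} = space Mc" using FC_lt1 by (auto simp: less_imp_le)
      thus ?thesis using eq True prob_space by simp
    next
      case False
      thus ?thesis using eq b \<open>G t \<noteq> 0\<close> Mc_FC_le[of "G t"] by simp
    qed
  qed
qed

lemma coord_distributed:
  assumes I: "finite I" "i \<in> I"
  shows "distributed (PiM I (\<lambda>_. Mc)) lborel (\<lambda>c. c i) (\<lambda>x. ennreal (cd 1 x))"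
proof -
  have "distr (PiM I (\<lambda>_. Mc)) lborel (\<lambda>c. c i) = distr (PiM I (\<lambda>_. Mc)) Mc (\<lambda>c. c i)"
    by (rule distr_cong) auto
  also have "\<dots> = Mc" by (rule distr_PiM_component) (use I Mc_prob in auto)
  finally have d: "distr (PiM I (\<lambda>_. Mc)) lborel (\<lambda>c. c i) = Mc" .
  have m: "(\<lambda>c. c i) \<in> measurable (PiM I (\<lambda>_. Mc)) Mc"
    by (rule measurable_component_singleton) (use I in auto)
  have m2: "(\<lambda>c. c i) \<in> measurable (PiM I (\<lambda>_. Mc)) lborel"
    using m measurable_cong_sets[of "PiM I (\<lambda>_. Mc)" "PiM I (\<lambda>_. Mc)" Mc lborel] by simp
  show ?thesis unfolding distributed_def using d m2 by (simp add: Mc_def)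
qed

lemma coord_indep:
  assumes I: "finite I" "I \<noteq> {}"
  shows "prob_space.indep_vars (PiM I (\<lambda>_. Mc)) (\<lambda>_. borel) (\<lambda>i c. c i) I"
proof -
  interpret P: prob_space "PiM I (\<lambda>_. Mc)" by (rule prob_space_PiM) (use Mc_prob in auto)
  show ?thesis
  proof (subst P.indep_vars_iff_distr_eq_PiM'[OF I(2)])
    show "(\<lambda>c. c i) \<in> borel_measurable (PiM I (\<lambda>_. Mc))" if "i \<in> I" for i
    proof -
      have m: "(\<lambda>c. c i) \<in> measurable (PiM I (\<lambda>_. Mc)) Mc"
        by (rule measurable_component_singleton) (use that in auto)
      thus ?thesis using measurable_cong_sets[of "PiM I (\<lambda>_. Mc)" "PiM I (\<lambda>_. Mc)" Mc borel] by simp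
    qed
    have "distr (PiM I (\<lambda>_. Mc)) (PiM I (\<lambda>_. borel)) (\<lambda>c. \<lambda>i\<in>I. c i)
        = distr (PiM I (\<lambda>_. Mc)) (PiM I (\<lambda>_. Mc)) (\<lambda>c. c)"
      by (rule distr_cong) (auto simp: space_PiM intro!: sets_PiM_cong)
    also have "\<dots> = PiM I (\<lambda>_. Mc)" by (rule distr_id2) simp
    also have "\<dots> = PiM I (\<lambda>i. distr (PiM I (\<lambda>_. Mc)) borel (\<lambda>c. c i))"
    proof (rule PiM_cong)
      fix i assume "i \<in> I"
      have "distr (PiM I (\<lambda>_. Mc)) borel (\<lambda>c. c i) = distr (PiM I (\<lambda>_. Mc)) Mc (\<lambda>c. c i)"
        by (rule distr_cong) auto
      also have "\<dots> = Mc" by (rule distr_PiM_component) (use \<open>i \<in> I\<close> Mc_prob in auto)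
      finally show "Mc = distr (PiM I (\<lambda>_. Mc)) borel (\<lambda>c. c i)" by simp
    qed simp
    finally show "distr (PiM I (\<lambda>_. Mc)) (PiM I (\<lambda>_. borel)) (\<lambda>c. \<lambda>i\<in>I. c i)
        = PiM I (\<lambda>i. distr (PiM I (\<lambda>_. Mc)) borel (\<lambda>c. c i))" .
  qed
qed

lemma Omega_stab:
  assumes I: "finite I" and th: "\<And>i. i \<in> I \<Longrightarrow> 0 \<le> \<theta> i" and s1: "sum \<theta> I = 1"
  shows "distributed (PiM I (\<lambda>_. Mc)) lborel (\<lambda>c. \<Sum>i\<in>I. \<theta> i * c i) (\<lambda>x. ennreal (cd 1 x))"
proof -
  interpret P: prob_space "PiM I (\<lambda>_. Mc)" by (rule prob_space_PiM) (use Mc_prob in auto)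
  define J where "J = {i\<in>I. 0 < \<theta> i}"
  have JI: "J \<subseteq> I" and fJ: "finite J" using I by (auto simp: J_def)
  have z: "\<theta> i = 0" if "i \<in> I - J" for i using th[of i] that by (auto simp: J_def)
  have sJ: "sum \<theta> J = 1" using s1 sum.mono_neutral_left[OF I JI, of \<theta>] z by simp
  have J0: "J \<noteq> {}" using sJ by auto
  have I0: "I \<noteq> {}" using J0 JI by auto
  have eqs: "(\<lambda>c. \<Sum>i\<in>I. \<theta> i * c i) = (\<lambda>c. \<Sum>i\<in>J. \<theta> i * c i)"
    by (intro ext sum.mono_neutral_right[OF I JI]) (simp add: z)
  have ind: "P.indep_vars (\<lambda>_. borel) (\<lambda>i c. \<theta> i * c i) J"
  proof -
    have "P.indep_vars (\<lambda>_. borel) (\<lambda>i c. c i) J"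
      by (rule P.indep_vars_subset[OF coord_indep[OF I I0] JI])
    from P.indep_vars_compose2[OF this, of "\<lambda>i x. \<theta> i * x" "\<lambda>_. borel"]
    show ?thesis by simp
  qed
  have "distributed (PiM I (\<lambda>_. Mc)) lborel (\<lambda>c. \<Sum>i\<in>J. \<theta> i * c i) (\<lambda>x. ennreal (cd (\<Sum>i\<in>J. \<theta> i) x))"
  proof (rule P.sum_cd_n[OF fJ J0 ind])
    fix i assume "i \<in> J"
    thus "0 < \<theta> i" by (simp add: J_def)
    show "distributed (PiM I (\<lambda>_. Mc)) lborel (\<lambda>c. \<theta> i * c i) (\<lambda>x. ennreal (cd (\<theta> i) x))"
      by (rule P.scale_cd[OF coord_distributed]) (use \<open>i \<in> J\<close> I JI in \<open>auto simp: J_def\<close>)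
  qed
  thus ?thesis unfolding eqs sJ .
qed



lemma phi_borel:
  fixes \<phi> :: "real \<Rightarrow> real"
  assumes "convex_on UNIV \<phi>" shows "\<phi> \<in> borel_measurable borel"
  by (intro borel_measurable_continuous_onI convex_on_continuous[OF open_UNIV assms])

lemma (in prob_space) main_ineq:
  fixes X :: "'i \<Rightarrow> 'a \<Rightarrow> real" and \<theta> :: "'i \<Rightarrow> real"
  assumes G: "is_dist_fun G" and cvx: "convex_on UNIV (\<lambda>x. quantile G (F_C x))"
    and I: "finite I" "i0 \<in> I" and th: "\<And>i. i \<in> I \<Longrightarrow> 0 \<le> \<theta> i" and s1: "sum \<theta> I = 1"
    and Xm: "\<And>i. i \<in> I \<Longrightarrow> X i \<in> borel_measurable M"
    and ind: "indep_vars (\<lambda>_. borel) X I"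
    and cdf: "\<And>i t. i \<in> I \<Longrightarrow> measure M {\<omega> \<in> space M. X i \<omega> \<le> t} = G t"
  shows "measure M {\<omega> \<in> space M. (\<Sum>i\<in>I. \<theta> i * X i \<omega>) \<le> t} \<le> measure M {\<omega> \<in> space M. X i0 \<omega> \<le> t}"
proof -
  define \<phi> where "\<phi> x = quantile G (F_C x)" for x
  have cvx': "convex_on UNIV \<phi>" using cvx by (simp add: \<phi>_def[abs_def])
  have \<phi>b[measurable]: "\<phi> \<in> borel_measurable borel" by (rule phi_borel[OF cvx'])
  have \<phi>Mc: "\<phi> \<in> measurable Mc borel" using \<phi>b measurable_cong_sets[of Mc borel borel borel] by simp
  interpret Mc: prob_space Mc by (rule Mc_prob)
  define \<mu>G where "\<mu>G = distr Mc borel \<phi>"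
  have \<mu>Gp: "prob_space \<mu>G" unfolding \<mu>G_def by (rule Mc.prob_space_distr[OF \<phi>Mc])
  have \<mu>Gs[simp]: "sets \<mu>G = sets borel" by (simp add: \<mu>G_def)
  have \<mu>G_cdf: "measure \<mu>G {..t} = G t" for t
  proof -
    have "measure \<mu>G {..t} = measure Mc (\<phi> -` {..t} \<inter> space Mc)"
      unfolding \<mu>G_def by (rule measure_distr[OF \<phi>Mc]) simp
    also have "\<phi> -` {..t} \<inter> space Mc = {x. quantile G (F_C x) \<le> t}" by (auto simp: \<phi>_def)
    finally show ?thesis using Mc_phi[OF G] by simp
  qed
  have dX: "distr M borel (X i) = \<mu>G" if "i \<in> I" for i
  proof (rule cdf_unique)
    show "real_distribution (distr M borel (X i))" using Xm[OF that] by simp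
    show "real_distribution \<mu>G" unfolding real_distribution_def real_distribution_axioms_def using \<mu>Gp by simp
    show "cdf (distr M borel (X i)) = cdf \<mu>G"
    proof
      fix t
      have "cdf (distr M borel (X i)) t = measure M (X i -` {..t} \<inter> space M)"
        unfolding cdf_def by (rule measure_distr[OF Xm[OF that]]) simp
      also have "X i -` {..t} \<inter> space M = {\<omega> \<in> space M. X i \<omega> \<le> t}" by auto
      finally show "cdf (distr M borel (X i)) t = cdf \<mu>G t" using cdf[OF that] \<mu>G_cdf by (simp add: cdf_def)
    qed
  qed
  have I0: "I \<noteq> {}" using I by auto
  define PB where "PB = PiM I (\<lambda>_. borel::real measure)"
  define PG where "PG = PiM I (\<lambda>_. \<mu>G)"
  define \<Omega> where "\<Omega> = PiM I (\<lambda>_. Mc)"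
  interpret Om: prob_space \<Omega> unfolding \<Omega>_def by (rule prob_space_PiM) (rule Mc_prob)
  have sPG: "sets PG = sets PB" unfolding PG_def PB_def by (rule sets_PiM_cong) auto
  define V where "V \<omega> = (\<lambda>i\<in>I. X i \<omega>)" for \<omega>
  have Vm: "V \<in> measurable M PB" unfolding V_def PB_def by (rule measurable_restrict) (rule Xm)
  have dV: "distr M PB V = PG"
  proof -
    have "distr M PB V = PiM I (\<lambda>i. distr M borel (X i))"
      unfolding PB_def V_def using indep_vars_iff_distr_eq_PiM'[OF I0, where M'="\<lambda>_. borel" and X=X] Xm ind by simp
    also have "\<dots> = PG" unfolding PG_def by (rule PiM_cong) (auto simp: dX)
    finally show ?thesis .
  qed
  define W where "W = compose I \<phi>"
  have \<phi>MG: "\<phi> \<in> measurable Mc \<mu>G" using \<phi>Mc measurable_cong_sets[of Mc Mc \<mu>G borel] by simp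
  have dW: "distr \<Omega> PG W = PG"
  proof -
    have "distr \<Omega> PG W = PiM I (\<lambda>i. distr Mc \<mu>G \<phi>)" unfolding \<Omega>_def PG_def W_def
      by (rule distr_PiM_finite_prob_space'[OF I(1)]) (auto intro: Mc_prob \<mu>Gp \<phi>MG)
    also have "\<dots> = PG" unfolding PG_def
    proof (rule PiM_cong)
      fix i assume "i \<in> I"
      show "distr Mc \<mu>G \<phi> = \<mu>G" unfolding \<mu>G_def by (rule distr_cong) auto
    qed simp
    finally show ?thesis .
  qed
  have Wm: "W \<in> measurable \<Omega> PG"
    unfolding W_def compose_def \<Omega>_def PG_def
  proof (rule measurable_restrict)
    fix i assume "i \<in> I"
    show "(\<lambda>c. \<phi> (c i)) \<in> measurable (PiM I (\<lambda>_. Mc)) \<mu>G"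
      by (rule measurable_compose[OF measurable_component_singleton[OF \<open>i \<in> I\<close>] \<phi>MG])
  qed
  define h where "h y = (\<Sum>i\<in>I. \<theta> i * y i)" for y :: "'i \<Rightarrow> real"
  define A where "A = {y \<in> space PB. h y \<le> t}"
  have hm[measurable]: "h \<in> borel_measurable PB" unfolding h_def PB_def by measurable
  have A: "A \<in> sets PB" unfolding A_def by measurable
  have AG: "A \<in> sets PG" using A sPG by simp
  have e1: "{\<omega> \<in> space M. (\<Sum>i\<in>I. \<theta> i * X i \<omega>) \<le> t} = V -` A \<inter> space M"
    by (auto simp: A_def h_def V_def PB_def space_PiM)
  have p1: "measure M {\<omega> \<in> space M. (\<Sum>i\<in>I. \<theta> i * X i \<omega>) \<le> t} = measure PG A"
    using e1 measure_distr[OF Vm A] dV by simp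
  have e2: "{c \<in> space \<Omega>. (\<Sum>i\<in>I. \<theta> i * \<phi> (c i)) \<le> t} = W -` A \<inter> space \<Omega>"
    by (auto simp: A_def h_def W_def compose_def PB_def \<Omega>_def space_PiM)
  have p2: "measure \<Omega> {c \<in> space \<Omega>. (\<Sum>i\<in>I. \<theta> i * \<phi> (c i)) \<le> t} = measure PG A"
    using e2 measure_distr[OF Wm AG] dW by simp
  have Zd: "distributed \<Omega> lborel (\<lambda>c. \<Sum>i\<in>I. \<theta> i * c i) (\<lambda>x. ennreal (cd 1 x))"
    unfolding \<Omega>_def by (rule Omega_stab[OF I(1) th s1])
  have Zm: "(\<lambda>c. \<Sum>i\<in>I. \<theta> i * c i) \<in> measurable \<Omega> lborel" using Zd by (simp add: distributed_def)
  have dZ: "distr \<Omega> lborel (\<lambda>c. \<Sum>i\<in>I. \<theta> i * c i) = Mc" using Zd by (simp add: distributed_def Mc_def)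
  have sub: "{c \<in> space \<Omega>. (\<Sum>i\<in>I. \<theta> i * \<phi> (c i)) \<le> t} \<subseteq> {c \<in> space \<Omega>. \<phi> (\<Sum>i\<in>I. \<theta> i * c i) \<le> t}"
  proof safe
    fix c assume c: "c \<in> space \<Omega>" "(\<Sum>i\<in>I. \<theta> i * \<phi> (c i)) \<le> t"
    have "\<phi> (\<Sum>i\<in>I. \<theta> i *\<^sub>R c i) \<le> (\<Sum>i\<in>I. \<theta> i * \<phi> (c i))"
      by (rule convex_on_sum[OF I(1) I0 cvx' s1 th]) auto
    thus "\<phi> (\<Sum>i\<in>I. \<theta> i * c i) \<le> t" using c by simp
  qed
  have Beq: "{c \<in> space \<Omega>. \<phi> (\<Sum>i\<in>I. \<theta> i * c i) \<le> t} = (\<lambda>c. \<Sum>i\<in>I. \<theta> i * c i) -` {x. \<phi> x \<le> t} \<inter> space \<Omega>"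
    by auto
  have Bs: "{x. \<phi> x \<le> t} \<in> sets lborel" by measurable
  have Bm: "{c \<in> space \<Omega>. \<phi> (\<Sum>i\<in>I. \<theta> i * c i) \<le> t} \<in> Om.events"
    unfolding Beq by (rule measurable_sets[OF Zm Bs])
  have p3: "measure \<Omega> {c \<in> space \<Omega>. \<phi> (\<Sum>i\<in>I. \<theta> i * c i) \<le> t} = G t"
  proof -
    have "measure \<Omega> {c \<in> space \<Omega>. \<phi> (\<Sum>i\<in>I. \<theta> i * c i) \<le> t}
        = measure (distr \<Omega> lborel (\<lambda>c. \<Sum>i\<in>I. \<theta> i * c i)) {x. \<phi> x \<le> t}"
      unfolding Beq by (rule measure_distr[OF Zm Bs, symmetric])
    also have "\<dots> = measure Mc {x. quantile G (F_C x) \<le> t}" unfolding dZ \<phi>_def ..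
    also have "\<dots> = G t" by (rule Mc_phi[OF G])
    finally show ?thesis .
  qed
  have "measure \<Omega> {c \<in> space \<Omega>. (\<Sum>i\<in>I. \<theta> i * \<phi> (c i)) \<le> t}
      \<le> measure \<Omega> {c \<in> space \<Omega>. \<phi> (\<Sum>i\<in>I. \<theta> i * c i) \<le> t}"
    by (rule Om.finite_measure_mono[OF sub Bm])
  thus ?thesis using p1 p2 p3 cdf[OF I(2)] by simp
qed

lemma SC_sub_D: "S_C \<subseteq> {G. is_dist_fun G \<and> Dminus TYPE('a) G}"
proof
  fix G assume "G \<in> S_C"
  hence G: "is_dist_fun G" and cvx: "convex_on UNIV (\<lambda>x. quantile G (F_C x))"
    by (auto simp: skew_class_def skew_le_def set_FC)
  have "Dminus TYPE('a) G"
    unfolding Dminus_def st_le_def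
  proof (intro allI impI)
    fix M :: "'a measure" and X :: "nat \<Rightarrow> 'a \<Rightarrow> real" and n :: nat and \<theta> :: "nat \<Rightarrow> real" and t :: real
    assume pM: "prob_space M" and n: "1 \<le> n" and th: "\<forall>i\<in>{1..n}. 0 \<le> \<theta> i"
      and s: "(\<Sum>i=1..n. \<theta> i) = 1" and Xm: "\<forall>i\<in>{1..n}. X i \<in> borel_measurable M"
      and ind: "prob_space.indep_vars M (\<lambda>_. borel) X {1..n}"
      and cdf: "\<forall>i\<in>{1..n}. \<forall>t. measure M {\<omega> \<in> space M. X i \<omega> \<le> t} = G t"
    show "measure M {\<omega> \<in> space M. (\<Sum>i=1..n. \<theta> i * X i \<omega>) \<le> t} \<le> measure M {\<omega> \<in> space M. X 1 \<omega> \<le> t}"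
      by (rule prob_space.main_ineq[OF pM G cvx]) (use n th s Xm ind cdf in auto)
  qed
  thus "G \<in> {G. is_dist_fun G \<and> Dminus TYPE('a) G}" using G by simp
qed

theorem theorem7:
  shows "S_P \<subseteq> S_F \<and> S_F \<subseteq> S_C \<and> S_C \<subseteq> {G. is_dist_fun G \<and> Dminus TYPE('a) G}"
  using SP_sub_SF SF_sub_SC SC_sub_D by blast


end
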